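(* Let $S$ be a numerical semigroup with minimal generators $e<a_1<\dots<a_t$, and let $n\in S$ with $n\equiv i\pmod e$, $0\le i<e$. Then ${\rm adj}(n)\in{\rm adj}(S_i)$ and ${\rm d}_{\max}(n;S)\le|\mathcal R({\rm adj}(n))|$. In particular, $\mathcal R({\rm adj}(n))$ is nonempty.
   Context: A numerical semigroup is a submonoid of $(\mathbb N,+)$ with finite complement in $\mathbb N$. An $S$-factorization of $n\in S$ is a tuple $(c_0,\dots,c_t)\in\mathbb N^{t+1}$ with $c_0e+\sum c_ia_i=n$, of length $\sum c_i$. ${\rm ord}(n;S)$ is the maximal such length, and ${\rm d}_{\max}(n;S)$ is the number of $S$-factorizations of $n$ of length ${\rm ord}(n;S)$. Let $d_i=a_i-e$, $B=\langle e,d_1,\dots,d_t\rangle$ and $\mathcal D=(e,d_1,\dots,d_t)$. A $B^{\mathcal D}$-factorization of $b\in B$ is $(x_0,\dots,x_t)\in\mathbb N^{t+1}$ with $x_0e+\sum x_id_i=b$, of length $\sum x_i$. $\min{\rm ord}(b;B^{\mathcal D})$ is the minimal such length, and $\mathcal P(b)$ is the set of all of them. Put ${\rm adj}(s)=s-{\rm ord}(s;S)e$ for $s\in S$, and $S_i=\{s\in S:s\equiv i\pmod e\}$. Write ${\rm adj}(S_i)=\{{\rm adj}(s):s\in S_i\}=\{u_0<u_1<\cdots\}$. Define $\mathcal R(u_0)=\mathcal P(u_0)$ and, for $j>0$, $\mathcal R(u_j)=\{\mathbf x\in\mathcal P(u_j):|\mathbf x|<\min{\rm ord}(u_{j-1};B^{\mathcal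 D})-\frac{u_j-u_{j-1}}{e}\}$. *)

theory Defs
  imports Complex_Main
begin

definition numerical_semigroup :: "nat set \<Rightarrow> bool" where
  "numerical_semigroup S \<longleftrightarrow> 0 \<in> S \<and> (\<forall>x\<in>S. \<forall>y\<in>S. x + y \<in> S) \<and> finite (UNIV - S)"

inductive_set monoid_gen :: "nat set \<Rightarrow> nat set" for G where
  zero: "0 \<in> monoid_gen G"
| step: "x \<in> G \<Longrightarrow> y \<in> monoid_gen G \<Longrightarrow> x + y \<in> monoid_gen G"

definition minimal_generating_system :: "nat set \<Rightarrow> nat set \<Rightarrow> bool" where
  "minimal_generating_system G S \<longleftrightarrow> monoid_gen G = S \<and> (\<forall>H. H \<subset> G \<longrightarrow> monoid_gen H \<noteq> S)"

text \<open>Tuples (c_0,...,c_t) in N^(t+1) are represented as functions nat => nat vanishing above t.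
  Generators: e (index 0) and a 1, ..., a t.\<close>

definition tuple_len :: "nat \<Rightarrow> (nat \<Rightarrow> nat) \<Rightarrow> nat" where
  "tuple_len t c = (\<Sum>j\<le>t. c j)"

definition S_facts :: "nat \<Rightarrow> (nat \<Rightarrow> nat) \<Rightarrow> nat \<Rightarrow> nat \<Rightarrow> (nat \<Rightarrow> nat) set" where
  "S_facts e a t n = {c. (\<forall>j>t. c j = 0) \<and> c 0 * e + (\<Sum>j=1..t. c j * a j) = n}"

definition ord_S :: "nat \<Rightarrow> (nat \<Rightarrow> nat) \<Rightarrow> nat \<Rightarrow> nat \<Rightarrow> nat" where
  "ord_S e a t n = Max (tuple_len t ` S_facts e a t n)"

definition dmax :: "nat \<Rightarrow> (nat \<Rightarrow> nat) \<Rightarrow> nat \<Rightarrow> nat \<Rightarrow> nat" where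
  "dmax e a t n = card {c \<in> S_facts e a t n. tuple_len t c = ord_S e a t n}"

definition P_facts :: "nat \<Rightarrow> (nat \<Rightarrow> nat) \<Rightarrow> nat \<Rightarrow> nat \<Rightarrow> (nat \<Rightarrow> nat) set" where
  "P_facts e a t b = {x. (\<forall>j>t. x j = 0) \<and> x 0 * e + (\<Sum>j=1..t. x j * (a j - e)) = b}"

definition minord_B :: "nat \<Rightarrow> (nat \<Rightarrow> nat) \<Rightarrow> nat \<Rightarrow> nat \<Rightarrow> nat" where
  "minord_B e a t b = Min (tuple_len t ` P_facts e a t b)"

definition adj :: "nat \<Rightarrow> (nat \<Rightarrow> nat) \<Rightarrow> nat \<Rightarrow> nat \<Rightarrow> nat" where
  "adj e a t s = s - ord_S e a t s * e"

definition S_res :: "nat set \<Rightarrow> nat \<Rightarrow> nat \<Rightarrow> nat set" where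
  "S_res S e i = {s \<in> S. s mod e = i}"

definition adj_set :: "nat set \<Rightarrow> nat \<Rightarrow> (nat \<Rightarrow> nat) \<Rightarrow> nat \<Rightarrow> nat \<Rightarrow> nat set" where
  "adj_set S e a t i = adj e a t ` S_res S e i"

text \<open>R(u) for u in adj(S_i) = {u_0 < u_1 < ...}: if u = u_0 then P(u); if u = u_j with j > 0,
  the predecessor u_{j-1} is the largest element of adj(S_i) below u.\<close>
definition R_set :: "nat set \<Rightarrow> nat \<Rightarrow> (nat \<Rightarrow> nat) \<Rightarrow> nat \<Rightarrow> nat \<Rightarrow> nat \<Rightarrow> (nat \<Rightarrow> nat) set" where
  "R_set S e a t i u =
     (if u = Min (adj_set S e a t i) then P_facts e a t u
      else (let u' = Max {v \<in> adj_set S e a t i. v < u} in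
            {x \<in> P_facts e a t u.
               real (tuple_len t x) < real (minord_B e a t u') - (real u - real u') / real e}))"

end

theory Submission
  imports Defs
begin

lemma sum_split0: "(\<Sum>j\<le>(t::nat). f j) = (f 0::nat) + (\<Sum>j=1..t. f j)"
proof -
  have "{..t} = insert 0 {1..t}" by (auto simp: not_less_eq_eq)
  then show ?thesis by simp
qed

lemma sum_upd0[simp]: "(\<Sum>j=1..(t::nat). (c(0:=v)) j * g j) = (\<Sum>j=1..t. c j * (g j::nat))"
  by (rule sum.cong) auto

lemma sum_upd_Suc:
  assumes "finite A" "j \<in> A"
  shows "(\<Sum>i\<in>A. (c(j := Suc (c j))) i * g i) = (\<Sum>i\<in>A. c i * (g i::nat)) + g j"
proof -
  have "(\<Sum>i\<in>A. (c(j := Suc (c j))) i * g i) = (\<Sum>i\<in>A. c i * g i + (if i = j then g j else 0))"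
    by (rule sum.cong) auto
  also have "\<dots> = (\<Sum>i\<in>A. c i * g i) + g j" using assms by (simp add: sum.distrib)
  finally show ?thesis .
qed

lemma finite_funs: "finite {c::nat\<Rightarrow>nat. (\<forall>j>t. c j = 0) \<and> (\<forall>j. c j \<le> B)}"
proof -
  let ?A = "{c::nat\<Rightarrow>nat. (\<forall>j>t. c j = 0) \<and> (\<forall>j. c j \<le> B)}"
  have inj: "inj_on (\<lambda>c. map c [0..<Suc t]) ?A"
  proof (rule inj_onI)
    fix c d assume c: "c \<in> ?A" and d: "d \<in> ?A" and eq: "map c [0..<Suc t] = map d [0..<Suc t]"
    show "c = d"
    proof
      fix j show "c j = d j"
      proof (cases "j \<le> t")
        case True
        then have "map c [0..<Suc t] ! j = map d [0..<Suc t] ! j" using eq by (simp del: upt_Suc)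
        with True show ?thesis by (simp del: upt_Suc)
      next
        case False then show ?thesis using c d by auto
      qed
    qed
  qed
  have "(\<lambda>c. map c [0..<Suc t]) ` ?A \<subseteq> {xs. set xs \<subseteq> {..B} \<and> length xs = Suc t}" by auto
  moreover have "finite {xs. set xs \<subseteq> {..B} \<and> length xs = Suc t}"
    by (rule finite_lists_length_eq) simp
  ultimately have "finite ((\<lambda>c. map c [0..<Suc t]) ` ?A)" by (rule finite_subset)
  then show ?thesis using inj finite_imageD by blast
qed

lemma gen_bound:
  fixes t :: nat and c :: "nat \<Rightarrow> nat"
  assumes "e > 0" "\<forall>j\<in>{1..t}. 0 < g j" "c 0 * e + (\<Sum>j=1..t. c j * g j) = (n::nat)" "\<forall>j>t. c j = 0"
  shows "c j \<le> n"
proof -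
  consider "j = 0" | "j \<in> {1..t}" | "j > t" by (cases j; cases "j \<le> t") auto
  then show ?thesis
  proof cases
    case 1
    have "c 0 \<le> c 0 * e" using assms(1) by simp
    then have "c 0 \<le> n" using assms(3) by linarith
    then show ?thesis using 1 by simp
  next
    case 2
    have "0 < g j" using assms(2) 2 by blast
    then have "c j \<le> c j * g j" by simp
    moreover have "c j * g j \<le> (\<Sum>j=1..t. c j * g j)"
      by (rule member_le_sum) (use 2 in auto)
    ultimately show ?thesis using assms(3) by linarith
  next
    case 3 then show ?thesis using assms(4) by simp
  qed
qed

lemma S_facts_finite:
  assumes "e>0" "\<forall>j\<in>{1..t}. e < a j" shows "finite (S_facts e a t n)"
proof (rule finite_subset[OF _ finite_funs[of t n]])
  show "S_facts e a t n \<subseteq> {c. (\<forall>j>t. c j = 0) \<and> (\<forall>j. c j \<le> n)}"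
  proof
    fix c assume "c \<in> S_facts e a t n"
    then have c: "\<forall>j>t. c j = 0" "c 0 * e + (\<Sum>j=1..t. c j * a j) = n" by (auto simp: S_facts_def)
    have "\<forall>j\<in>{1..t}. 0 < a j" using assms(2) by force
    then show "c \<in> {c. (\<forall>j>t. c j = 0) \<and> (\<forall>j. c j \<le> n)}"
      using gen_bound[OF assms(1) _ c(2) c(1)] c(1) by auto
  qed
qed

lemma P_facts_finite:
  assumes "e>0" "\<forall>j\<in>{1..t}. e < a j" shows "finite (P_facts e a t n)"
proof (rule finite_subset[OF _ finite_funs[of t n]])
  show "P_facts e a t n \<subseteq> {c. (\<forall>j>t. c j = 0) \<and> (\<forall>j. c j \<le> n)}"
  proof
    fix c assume "c \<in> P_facts e a t n"
    then have c: "\<forall>j>t. c j = 0" "c 0 * e + (\<Sum>j=1..t. c j * (a j - e)) = n" by (auto simp: P_facts_def)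
    have "\<forall>j\<in>{1..t}. 0 < a j - e" using assms(2) by force
    then show "c \<in> {c. (\<forall>j>t. c j = 0) \<and> (\<forall>j. c j \<le> n)}"
      using gen_bound[OF assms(1) _ c(2) c(1)] c(1) by auto
  qed
qed

lemma sum_a_split:
  fixes t e :: nat and a y :: "nat \<Rightarrow> nat"
  assumes "\<forall>j\<in>{1..t}. e < a j"
  shows "(\<Sum>j=1..t. y j * a j) = (\<Sum>j=1..t. y j) * e + (\<Sum>j=1..t. y j * (a j - e))"
proof -
  have "(\<Sum>j=1..t. y j * a j) = (\<Sum>j=1..t. y j * e + y j * (a j - e))"
  proof (rule sum.cong)
    fix j assume "j \<in> {1..t}"
    then have "e < a j" using assms by blast
    then have "a j = e + (a j - e)" by simp
    then have "y j * a j = y j * (e + (a j - e))" by (rule arg_cong)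
    then show "y j * a j = y j * e + y j * (a j - e)" by (simp add: add_mult_distrib2)
  qed simp
  also have "\<dots> = (\<Sum>j=1..t. y j) * e + (\<Sum>j=1..t. y j * (a j - e))"
    by (simp add: sum.distrib sum_distrib_right)
  finally show ?thesis .
qed

lemma fact_eq:
  assumes "\<forall>j\<in>{1..t}. e < a j" "c \<in> S_facts e a t n"
  shows "n = tuple_len t c * e + (\<Sum>j=1..t. c j * (a j - e))"
proof -
  have n: "c 0 * e + (\<Sum>j=1..t. c j * a j) = n" using assms(2) by (simp add: S_facts_def)
  show ?thesis using n sum_a_split[OF assms(1), of c]
    by (simp add: tuple_len_def sum_split0 algebra_simps)
qed

lemma e_pos:
  assumes "\<forall>j\<in>{1..t}. e < a j" "minimal_generating_system (insert e (a ` {1..t})) S"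
  shows "e > 0"
proof (rule ccontr)
  assume "\<not> e > 0" then have e0: "e = 0" by simp
  let ?H = "a ` {1..t}"
  have "e \<notin> ?H" using assms(1) e0 by auto
  then have sub: "?H \<subset> insert e ?H" by auto
  have "monoid_gen (insert e ?H) \<subseteq> monoid_gen ?H"
  proof
    fix x assume "x \<in> monoid_gen (insert e ?H)"
    then show "x \<in> monoid_gen ?H"
      by induction (auto simp: e0 intro: monoid_gen.intros)
  qed
  moreover have "monoid_gen ?H \<subseteq> monoid_gen (insert e ?H)"
  proof
    fix x assume "x \<in> monoid_gen ?H"
    then show "x \<in> monoid_gen (insert e ?H)" by induction (auto intro: monoid_gen.intros)
  qed
  ultimately have "monoid_gen ?H = S" using assms(2) by (auto simp: minimal_generating_system_def)
  then show False using assms(2) sub by (auto simp: minimal_generating_system_def)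
qed

lemma gen_facts:
  assumes "x \<in> monoid_gen (insert e (a ` {1..t}))"
  shows "\<exists>c. c \<in> S_facts e a t x"
  using assms
proof induction
  case zero
  show ?case by (rule exI[of _ "\<lambda>_. 0"]) (simp add: S_facts_def)
next
  case (step x y)
  then obtain c where c: "c \<in> S_facts e a t y" by blast
  from step.hyps(1) consider "x = e" | j where "j \<in> {1..t}" "x = a j" by auto
  then show ?case
  proof cases
    case 1
    then show ?thesis using c by (intro exI[of _ "c(0 := Suc (c 0))"]) (auto simp: S_facts_def)
  next
    case 2
    have "(\<Sum>i=1..t. (c(j := Suc (c j))) i * a i) = (\<Sum>i=1..t. c i * a i) + a j"
      by (rule sum_upd_Suc) (use 2 in auto)
    then show ?thesis using c 2 by (intro exI[of _ "c(j := Suc (c j))"]) (auto simp: S_facts_def)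
  qed
qed


lemma ord_max:
  assumes "e>0" "\<forall>j\<in>{1..t}. e < a j" "c \<in> S_facts e a t n"
  shows "tuple_len t c \<le> ord_S e a t n"
  unfolding ord_S_def using S_facts_finite[OF assms(1,2)] assms(3) by (intro Max_ge) auto

lemma ord_ex:
  assumes "e>0" "\<forall>j\<in>{1..t}. e < a j" "S_facts e a t n \<noteq> {}"
  shows "\<exists>c\<in>S_facts e a t n. tuple_len t c = ord_S e a t n"
proof -
  have "ord_S e a t n \<in> tuple_len t ` S_facts e a t n"
    unfolding ord_S_def using S_facts_finite[OF assms(1,2)] assms(3) by (intro Max_in) auto
  then show ?thesis by auto
qed

lemma adj_eq:
  assumes "e>0" "\<forall>j\<in>{1..t}. e < a j" "S_facts e a t n \<noteq> {}"
  shows "adj e a t n + ord_S e a t n * e = n"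
proof -
  obtain c where c: "c \<in> S_facts e a t n" "tuple_len t c = ord_S e a t n"
    using ord_ex[OF assms] by blast
  have "n = ord_S e a t n * e + (\<Sum>j=1..t. c j * (a j - e))" using fact_eq[OF assms(2) c(1)] c(2) by simp
  then show ?thesis unfolding adj_def by linarith
qed

lemma drop0_P:
  assumes "e>0" "\<forall>j\<in>{1..t}. e < a j" "c \<in> S_facts e a t s" "tuple_len t c = ord_S e a t s"
  shows "c(0:=0) \<in> P_facts e a t (adj e a t s)"
proof -
  have "s = ord_S e a t s * e + (\<Sum>j=1..t. c j * (a j - e))" using fact_eq[OF assms(2,3)] assms(4) by simp
  then have "adj e a t s = (\<Sum>j=1..t. c j * (a j - e))" unfolding adj_def by linarith
  then show ?thesis using assms(3) by (auto simp: P_facts_def S_facts_def)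
qed

lemma ord_add:
  assumes "e>0" "\<forall>j\<in>{1..t}. e < a j" "S_facts e a t s \<noteq> {}"
  shows "ord_S e a t s + k \<le> ord_S e a t (s + k * e)"
proof -
  obtain c where c: "c \<in> S_facts e a t s" "tuple_len t c = ord_S e a t s"
    using ord_ex[OF assms] by blast
  have "c(0 := c 0 + k) \<in> S_facts e a t (s + k * e)"
    using c(1) by (auto simp: S_facts_def algebra_simps)
  moreover have "tuple_len t (c(0 := c 0 + k)) = tuple_len t c + k"
    by (simp add: tuple_len_def sum_split0)
  ultimately show ?thesis using ord_max[OF assms(1,2)] c(2) by fastforce
qed

lemma adj_mod:
  assumes "e>0" "\<forall>j\<in>{1..t}. e < a j" "S_facts e a t s \<noteq> {}"
  shows "adj e a t s mod e = s mod e"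
proof -
  have "s = adj e a t s + ord_S e a t s * e" using adj_eq[OF assms] by simp
  then show ?thesis by (metis mod_mult_self1)
qed

lemma adj_set_finite:
  assumes "e>0" "\<forall>j\<in>{1..t}. e < a j" "\<forall>s\<in>S. S_facts e a t s \<noteq> {}"
  shows "finite (adj_set S e a t i)"
proof (cases "S_res S e i = {}")
  case True then show ?thesis by (simp add: adj_set_def)
next
  case False
  define s0 where "s0 = (LEAST s. s \<in> S_res S e i)"
  have s0: "s0 \<in> S_res S e i" using False unfolding s0_def by (metis LeastI ex_in_conv)
  have "adj_set S e a t i \<subseteq> {..adj e a t s0}"
  proof
    fix u assume "u \<in> adj_set S e a t i"
    then obtain s where s: "s \<in> S_res S e i" "u = adj e a t s" by (auto simp: adj_set_def)
    have le: "s0 \<le> s" unfolding s0_def using s(1) by (rule Least_le)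
    have "s mod e = s0 mod e" using s(1) s0 by (simp add: S_res_def)
    then have "e dvd s - s0" using le by (simp add: mod_eq_dvd_iff_nat)
    then obtain k where "s - s0 = e * k" by (auto elim: dvdE)
    then have sk: "s = s0 + k * e" using le by (metis le_add_diff_inverse mult.commute)
    have ne0: "S_facts e a t s0 \<noteq> {}" using assms(3) s0 by (simp add: S_res_def)
    have ne: "S_facts e a t s \<noteq> {}" using assms(3) s(1) by (simp add: S_res_def)
    have o: "ord_S e a t s0 + k \<le> ord_S e a t s" using ord_add[OF assms(1,2) ne0, of k] sk by simp
    have a0: "adj e a t s0 + ord_S e a t s0 * e = s0" by (rule adj_eq[OF assms(1,2) ne0])
    have a1: "adj e a t s + ord_S e a t s * e = s" by (rule adj_eq[OF assms(1,2) ne])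
    have "(ord_S e a t s0 + k) * e \<le> ord_S e a t s * e" using o by (rule mult_le_mono1)
    then have "ord_S e a t s0 * e + k * e \<le> ord_S e a t s * e" by (simp add: add_mult_distrib)
    then show "u \<in> {..adj e a t s0}" using a0 a1 sk s(2) by simp
  qed
  then show ?thesis using finite_subset by blast
qed

lemma key:
  assumes e: "e>0" and a: "\<forall>j\<in>{1..t}. e < a j" and ne: "S_facts e a t n \<noteq> {}"
    and lt: "u' < adj e a t n" and md: "u' mod e = adj e a t n mod e"
    and y: "y \<in> P_facts e a t u'"
    and ylen: "tuple_len t y = minord_B e a t u'"
  shows "ord_S e a t n + (adj e a t n - u') div e < minord_B e a t u'"
proof (rule ccontr)
  define L where "L = ord_S e a t n"
  define u where "u = adj e a t n"
  define k where "k = (u - u') div e"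
  assume "\<not> ?thesis"
  then have ge: "tuple_len t y \<le> L + k" using ylen by (simp add: L_def k_def u_def)
  have "e dvd u - u'" using mod_eq_dvd_iff_nat[of u' u e] md lt by (simp add: u_def)
  then obtain k' where k': "u - u' = e * k'" by (auto elim: dvdE)
  then have kk: "k = k'" using e by (simp add: k_def)
  have ku: "u = u' + k * e" using k' kk lt u_def
    by (metis less_imp_le le_add_diff_inverse mult.commute)
  have k1: "k \<ge> 1" using ku lt u_def by (cases k) auto
  have nL: "u + L * e = n" using adj_eq[OF e a ne] by (simp add: u_def L_def)
  have y0: "\<forall>j>t. y j = 0" "y 0 * e + (\<Sum>j=1..t. y j * (a j - e)) = u'"
    using y by (auto simp: P_facts_def)
  define Y where "Y = (\<Sum>j=1..t. y j)"
  define W where "W = (\<Sum>j=1..t. y j * (a j - e))"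
  have Yle: "Y \<le> tuple_len t y" by (simp add: tuple_len_def sum_split0 Y_def)
  define c where "c = y(0 := L + k + y 0 - Y)"
  have YY: "(L + k + y 0 - Y) * e + Y * e = (L + k + y 0) * e"
    using Yle ge by (simp add: add_mult_distrib[symmetric])
  have sa: "(\<Sum>j=1..t. y j * a j) = Y * e + W" using sum_a_split[OF a, of y] by (simp add: Y_def W_def)
  have "c 0 * e + (\<Sum>j=1..t. c j * a j) = n"
    using YY sa y0(2) ku nL unfolding c_def W_def by (simp add: add_mult_distrib)
  then have cS: "c \<in> S_facts e a t n" using y0(1) by (auto simp: S_facts_def c_def)
  have "tuple_len t c = L + k + y 0"
    using Yle ge by (simp add: tuple_len_def sum_split0 c_def Y_def)
  then have "L + k + y 0 \<le> L" using ord_max[OF e a cS] L_def by simp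
  with k1 show False by simp
qed

theorem theorem3p7:
  fixes S :: "nat set" and e t n i :: nat and a :: "nat \<Rightarrow> nat"
  assumes "numerical_semigroup S"
    and "\<forall>j\<in>{1..t}. e < a j"
    and "strict_mono_on {1..t} a"
    and "minimal_generating_system (insert e (a ` {1..t})) S"
    and "n \<in> S"
    and "i < e" and "n mod e = i"
  shows "adj e a t n \<in> adj_set S e a t i
     \<and> dmax e a t n \<le> card (R_set S e a t i (adj e a t n))
     \<and> R_set S e a t i (adj e a t n) \<noteq> {}"
proof -
  note a = assms(2)
  have e: "e > 0" by (rule e_pos[OF assms(2,4)])
  have Sg: "monoid_gen (insert e (a ` {1..t})) = S" using assms(4) by (simp add: minimal_generating_system_def)
  have allne: "\<forall>s\<in>S. S_facts e a t s \<noteq> {}" using gen_facts Sg by blast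
  have ne: "S_facts e a t n \<noteq> {}" using allne assms(5) by blast
  define u where "u = adj e a t n"
  define L where "L = ord_S e a t n"
  define D where "D = {c \<in> S_facts e a t n. tuple_len t c = L}"
  have part1: "u \<in> adj_set S e a t i" using assms(5,7) by (auto simp: u_def adj_set_def S_res_def)
  define \<phi> where "\<phi> = (\<lambda>c::nat\<Rightarrow>nat. c(0:=0))"
  have inj: "inj_on \<phi> D"
  proof (rule inj_onI)
    fix c d assume c: "c \<in> D" and d: "d \<in> D" and eq: "\<phi> c = \<phi> d"
    have j: "\<And>j. j \<noteq> 0 \<Longrightarrow> c j = d j" using eq unfolding \<phi>_def by (metis fun_upd_other)
    have "(\<Sum>j=1..t. c j) = (\<Sum>j=1..t. d j)" by (rule sum.cong) (auto intro: j)
    moreover have "tuple_len t c = tuple_len t d" using c d by (simp add: D_def)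
    ultimately have "c 0 = d 0" by (simp add: tuple_len_def sum_split0)
    then show "c = d" using j by (metis ext)
  qed
  have phiP: "\<And>c. c \<in> D \<Longrightarrow> \<phi> c \<in> P_facts e a t u"
    unfolding \<phi>_def u_def D_def L_def using drop0_P[OF e a] by blast
  have phiLen: "\<And>c. c \<in> D \<Longrightarrow> tuple_len t (\<phi> c) \<le> L"
    by (simp add: \<phi>_def D_def tuple_len_def sum_split0)
  have sub: "\<phi> ` D \<subseteq> R_set S e a t i u"
  proof (cases "u = Min (adj_set S e a t i)")
    case True then show ?thesis using phiP by (auto simp: R_set_def)
  next
    case False
    define V where "V = {v \<in> adj_set S e a t i. v < u}"
    have finA: "finite (adj_set S e a t i)" by (rule adj_set_finite[OF e a allne])
    have minA: "Min (adj_set S e a t i) \<in> adj_set S e a t i" using finA part1 by (intro Min_in) auto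
    have "Min (adj_set S e a t i) \<le> u" using finA part1 by (intro Min_le)
    then have "Min (adj_set S e a t i) < u" using False by simp
    then have Vne: "V \<noteq> {}" using minA V_def by blast
    have Vfin: "finite V" by (rule finite_subset[of _ "{..<u}"]) (auto simp: V_def)
    define u' where "u' = Max V"
    have u'V: "u' \<in> V" using Vne Vfin u'_def by simp
    then have u'lt: "u' < u" and u'A: "u' \<in> adj_set S e a t i" by (auto simp: V_def)
    obtain s' where s': "s' \<in> S_res S e i" "u' = adj e a t s'" using u'A by (auto simp: adj_set_def)
    have nes': "S_facts e a t s' \<noteq> {}" using allne s'(1) by (simp add: S_res_def)
    have md: "u' mod e = u mod e"
      using adj_mod[OF e a nes'] adj_mod[OF e a ne] s' assms(7) by (simp add: S_res_def u_def)
    obtain c' where c': "c' \<in> S_facts e a t s'" "tuple_len t c' = ord_S e a t s'"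
      using ord_ex[OF e a nes'] by blast
    have Pne: "P_facts e a t u' \<noteq> {}" using drop0_P[OF e a c'] s'(2) by auto
    have "minord_B e a t u' \<in> tuple_len t ` P_facts e a t u'"
      unfolding minord_B_def using P_facts_finite[OF e a] Pne by (intro Min_in) auto
    then obtain y where y: "y \<in> P_facts e a t u'" "tuple_len t y = minord_B e a t u'" by auto
    have K: "L + (u - u') div e < minord_B e a t u'"
      using key[OF e a ne _ _ y] u'lt md by (simp add: u_def L_def)
    have "e dvd u - u'" using mod_eq_dvd_iff_nat[of u' u e] md u'lt by simp
    then obtain k where k: "u - u' = e * k" by (auto elim: dvdE)
    then have kd: "(u - u') div e = k" using e by simp
    have "real u - real u' = real e * real k" using k u'lt
      by (metis less_imp_le of_nat_diff of_nat_mult)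
    then have rk: "(real u - real u') / real e = real k" using e by simp
    show ?thesis
    proof
      fix x assume "x \<in> \<phi> ` D"
      then obtain c where c: "c \<in> D" "x = \<phi> c" by blast
      have "tuple_len t x + k < minord_B e a t u'" using phiLen[OF c(1)] c(2) K kd by simp
      then have "real (tuple_len t x) < real (minord_B e a t u') - (real u - real u') / real e"
        using rk by linarith
      then show "x \<in> R_set S e a t i u"
        using phiP[OF c(1)] c(2) False unfolding R_set_def Let_def V_def[symmetric] u'_def[symmetric]
        by simp
    qed
  qed
  have Rsub: "R_set S e a t i u \<subseteq> P_facts e a t u" by (auto simp: R_set_def Let_def)
  have finR: "finite (R_set S e a t i u)" using finite_subset[OF Rsub P_facts_finite[OF e a]] .
  have "card D = card (\<phi> ` D)" using inj by (simp add: card_image)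
  also have "\<dots> \<le> card (R_set S e a t i u)" using sub finR by (rule card_mono[rotated])
  finally have part2: "dmax e a t n \<le> card (R_set S e a t i u)" by (simp add: dmax_def D_def L_def)
  have "D \<noteq> {}" using ord_ex[OF e a ne] by (auto simp: D_def L_def)
  then have "R_set S e a t i u \<noteq> {}" using sub by blast
  then show ?thesis using part1 part2 by (simp add: u_def)
qed

end
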